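(* For every oriented link $L$, $$\mathcal A_{\mathcal Q}(L)=\sup_{\mathbb X\in\mathcal Q_{\mathcal F}}a_{\mathbb X}(L,\mathcal P_m,\bar 1),$$ where $\bar 1$ assigns $1$ to every component. More precisely, for every odd prime $p$, every $z\ge1$ and every irreducible $h(t)\in\Lambda_p$ of positive breadth there is an irreducible $h'(t)\in\Lambda_p$ of positive breadth with $a_{(\mathbb F(p,h),* )}(L,\mathcal P_m,\bar z)\le a_{(\mathbb F(p,h'),* )}(L,\mathcal P_m,\bar 1)$, where $\bar z$ assigns $z$ to all components. In particular, for every knot $K$ there exists $\mathbb X\in\mathcal Q_{\mathcal F}$ with $\mathcal A_{\mathcal Q}(K)=a_{\mathbb X}(K,1)$.
   Context: A quandle is a set with operation $*$ satisfying $a*a=a$, $(a*b)*c=(a*c)*(b*c)$ and bijectivity of $x\mapsto x*b$; $a*^0b=a$, $a*^nb=(a*^{n-1}b)*b$. For an odd prime $p$, $\Lambda_p=\mathbb Z_p[t,t^{-1}]$; for $h\in\Lambda_p$ irreducible of positive breadth (breadth = highest minus lowest exponent), $\mathbb F(p,h)=\Lambda_p/(h)$, $\bar t$ the class of $t$, $\mathbb X=(\mathbb F(p,h),* )$ with $a*b=\bar ta+(1-\bar t)b$; $\mathcal Q_{\mathcal F}$ is the set of such. For an oriented link $L$, $\mathcal P_m=(L)$. An $\mathbb X$-coloring of a diagram of $L$ with label $z\ge0$ on all components assigns elements of $\mathbb X$ to arcs so that at each crossing with over-arc color $b$ the under-arcs on the right/left of the oriented over-arc have colors $a$ and $a*^zb$;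 colorings form a vector space of dimension $d$ and $a_{\mathbb X}(L,\mathcal P_m,\bar z)=d-1$ (for a knot, $a_{\mathbb X}(K,z)$). $\mathcal A_{\mathcal Q}(L)=\sup a_{\mathbb X}(L,\mathcal P_m,\bar z)$ over $\mathbb X\in\mathcal Q_{\mathcal F}$ and $z\ge0$; this is finite (bounded by the tunnel number). *)

theory Defs
  imports Main "HOL-Computational_Algebra.Polynomial" "Berlekamp_Zassenhaus.Poly_Mod"
begin

text \<open>Elements of \<open>\<Lambda>_p = Z_p[t,t^-1]\<close> that matter here are represented (up to the unit
  \<open>t^k\<close>) by integer polynomials read modulo the prime \<open>p\<close>.  A Laurent polynomial is
  irreducible of positive breadth iff it is \<open>t^k\<close> times a polynomial \<open>h\<close> of \<open>Z_p[t]\<close>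
  that is irreducible, has nonzero constant term and positive degree (= breadth).\<close>

definition irr_pos_breadth :: "int \<Rightarrow> int poly \<Rightarrow> bool" where
  "irr_pos_breadth p h \<longleftrightarrow> poly_mod.irreducible_m p h \<and> poly_mod.degree_m p h \<ge> 1
     \<and> \<not> p dvd coeff h 0"

definition feq :: "int \<Rightarrow> int poly \<Rightarrow> int poly \<Rightarrow> int poly \<Rightarrow> bool" where
  "feq p h x y \<longleftrightarrow> poly_mod.dvdm p h (x - y)"

definition alex_op :: "int poly \<Rightarrow> int poly \<Rightarrow> int poly" where
  "alex_op a b = [:0, 1:] * a + (1 - [:0, 1:]) * b"

definition alex_pow :: "nat \<Rightarrow> int poly \<Rightarrow> int poly \<Rightarrow> int poly" where
  "alex_pow n a b = ((\<lambda>x. alex_op x b) ^^ n) a"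

text \<open>An oriented link diagram, given combinatorially: arcs are \<open>0..<n\<close>;
  each crossing is a triple (over-arc, under-arc on the right of the oriented over-arc,
  under-arc on the left of the oriented over-arc).\<close>
record diagram =
  n_arcs :: nat
  crossings :: "(nat \<times> nat \<times> nat) list"

definition wf_diagram :: "diagram \<Rightarrow> bool" where
  "wf_diagram D \<longleftrightarrow> n_arcs D \<ge> 1 \<and>
     (\<forall>(b, r, l) \<in> set (crossings D). b < n_arcs D \<and> r < n_arcs D \<and> l < n_arcs D)"

text \<open>X-colorings with label z on all components (arc colors are representatives in F(p,h)).\<close>
definition is_coloring :: "int \<Rightarrow> int poly \<Rightarrow> nat \<Rightarrow> diagram \<Rightarrow> (nat \<Rightarrow> int poly) \<Rightarrow> bool" where
  "is_coloring p h z D c \<longleftrightarrow>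
     (\<forall>(b, r, l) \<in> set (crossings D). feq p h (c l) (alex_pow z (c r) (c b)))"

definition lin_indep :: "int \<Rightarrow> int poly \<Rightarrow> nat \<Rightarrow> nat \<Rightarrow> (nat \<Rightarrow> nat \<Rightarrow> int poly) \<Rightarrow> bool" where
  "lin_indep p h n d vs \<longleftrightarrow>
     (\<forall>c :: nat \<Rightarrow> int poly.
        (\<forall>j < n. feq p h (\<Sum>i<d. c i * vs i j) 0) \<longrightarrow> (\<forall>i<d. feq p h (c i) 0))"

definition col_dim :: "int \<Rightarrow> int poly \<Rightarrow> nat \<Rightarrow> diagram \<Rightarrow> nat" where
  "col_dim p h z D = (GREATEST d. \<exists>vs. (\<forall>i<d. is_coloring p h z D (vs i))
       \<and> lin_indep p h (n_arcs D) d vs)"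

definition a_inv :: "int \<Rightarrow> int poly \<Rightarrow> nat \<Rightarrow> diagram \<Rightarrow> int" where
  "a_inv p h z D = int (col_dim p h z D) - 1"

definition QF :: "(int \<times> int poly) set" where
  "QF = {(p, h). prime p \<and> odd p \<and> irr_pos_breadth p h}"

definition A_Q :: "diagram \<Rightarrow> int" where
  "A_Q D = (SUP x \<in> {(p, h, z). (p, h) \<in> QF}. a_inv (fst x) (fst (snd x)) (snd (snd x)) D)"

end

theory Submission
  imports Defs "HOL-Library.Function_Algebras"
begin


locale qfield =
  fixes Zs :: "'s::comm_ring_1 \<Rightarrow> bool"
  assumes Zs0: "Zs 0"
    and Zs_add: "Zs a \<Longrightarrow> Zs b \<Longrightarrow> Zs (a + b)"
    and Zs_mult: "Zs a \<Longrightarrow> Zs (a * b)"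
    and Zs_not1: "\<not> Zs 1"
    and Zs_inv: "\<not> Zs a \<Longrightarrow> \<exists>b. Zs (a * b - 1)"
    and Zs_fin: "finite ((\<lambda>a. {b. Zs (a - b)}) ` UNIV)"
begin

definition clsS :: "'s \<Rightarrow> 's set" where "clsS a = {b. Zs (a - b)}"
definition qq :: nat where "qq = card (range clsS)"

lemma Zs_mult2: "Zs b \<Longrightarrow> Zs (a * b)"
  using Zs_mult[of b a] by (simp add: mult.commute)

lemma Zs_neg: "Zs a \<Longrightarrow> Zs (- a)"
  using Zs_mult[of a "-1"] by simp

lemma Zs_neg_iff: "Zs (- a) \<longleftrightarrow> Zs a"
  using Zs_neg[of a] Zs_neg[of "-a"] by auto

lemma Zs_diff: "Zs a \<Longrightarrow> Zs b \<Longrightarrow> Zs (a - b)"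
  using Zs_add[of a "-b"] Zs_neg[of b] by simp

lemma Zs_sym: "Zs (a - b) \<Longrightarrow> Zs (b - a)"
  using Zs_neg[of "a - b"] by simp

lemma Zs_trans: "Zs (a - b) \<Longrightarrow> Zs (b - c) \<Longrightarrow> Zs (a - c)"
  using Zs_add[of "a - b" "b - c"] by simp

lemma clsS_eq: "clsS a = clsS b \<longleftrightarrow> Zs (a - b)"
proof
  assume "clsS a = clsS b"
  then have "b \<in> clsS a" by (auto simp: clsS_def Zs0)
  then show "Zs (a - b)" by (simp add: clsS_def)
next
  assume "Zs (a - b)"
  then show "clsS a = clsS b" unfolding clsS_def
    by (auto simp: set_eq_iff) (metis Zs_sym Zs_trans)+
qed

lemma fin_clsS: "finite (range clsS)"
  using Zs_fin unfolding clsS_def[abs_def] by simp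

lemma self_clsS: "a \<in> clsS a" by (simp add: clsS_def Zs0)

lemma qq_ge2: "qq \<ge> 2"
proof -
  have "clsS 0 \<noteq> clsS 1" using Zs_not1 Zs_neg_iff[of 1] by (simp add: clsS_eq)
  then have "card {clsS 0, clsS 1} = 2" by simp
  moreover have "card {clsS 0, clsS 1} \<le> qq" unfolding qq_def
    by (rule card_mono[OF fin_clsS]) auto
  ultimately show ?thesis by simp
qed

definition rp :: "'s set \<Rightarrow> 's" where "rp X = (SOME a. a \<in> X)"

lemma rp_cls: "Zs (rp (clsS a) - a)"
proof -
  have "rp (clsS a) \<in> clsS a" unfolding rp_def by (rule someI, rule self_clsS)
  then show ?thesis by (auto simp: clsS_def intro: Zs_sym)
qed

lemma domain: "Zs (a * b) \<Longrightarrow> Zs a \<or> Zs b"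
proof (rule ccontr)
  assume ab: "Zs (a * b)" and "\<not> (Zs a \<or> Zs b)"
  then obtain c where c: "Zs (a * c - 1)" using Zs_inv by blast
  have "Zs ((a * b) * c)" using ab by (rule Zs_mult)
  then have "Zs (b * (a * c - 1) - (a * b) * c)" using Zs_mult2[OF c, of b] Zs_diff by blast
  then have "Zs (- b)" by (simp add: algebra_simps)
  then show False using \<open>\<not> (Zs a \<or> Zs b)\<close> Zs_neg_iff by blast
qed

end

locale fmod = qfield Zs for Zs :: "'s::comm_ring_1 \<Rightarrow> bool" +
  fixes Zv :: "'v::ab_group_add \<Rightarrow> bool" and sm :: "'s \<Rightarrow> 'v \<Rightarrow> 'v"
  assumes Zv0: "Zv 0"
    and Zv_add: "Zv v \<Longrightarrow> Zv w \<Longrightarrow> Zv (v + w)"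
    and Zv_neg: "Zv v \<Longrightarrow> Zv (- v)"
    and sm_Zs: "Zs a \<Longrightarrow> Zv (sm a v)"
    and sm_Zv: "Zv v \<Longrightarrow> Zv (sm a v)"
    and sm_add1: "sm (a + b) v = sm a v + sm b v"
    and sm_add2: "sm a (v + w) = sm a v + sm a w"
    and sm_mult: "sm (a * b) v = sm a (sm b v)"
    and sm_one: "sm 1 v = v"
    and Zv_fin: "finite ((\<lambda>v. {w. Zv (v - w)}) ` UNIV)"
begin

definition cls :: "'v \<Rightarrow> 'v set" where "cls v = {w. Zv (v - w)}"
definition cnt :: "'v set \<Rightarrow> nat" where "cnt S = card (cls ` S)"

lemma Zv_diff: "Zv a \<Longrightarrow> Zv b \<Longrightarrow> Zv (a - b)"
  using Zv_add[of a "-b"] Zv_neg[of b] by simp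
lemma Zv_sym: "Zv (a - b) \<Longrightarrow> Zv (b - a)"
  using Zv_neg[of "a - b"] by simp
lemma Zv_trans: "Zv (a - b) \<Longrightarrow> Zv (b - c) \<Longrightarrow> Zv (a - c)"
  using Zv_add[of "a - b" "b - c"] by simp

lemma cls_eq: "cls a = cls b \<longleftrightarrow> Zv (a - b)"
proof
  assume "cls a = cls b"
  then have "b \<in> cls a" by (auto simp: cls_def Zv0)
  then show "Zv (a - b)" by (simp add: cls_def)
next
  assume "Zv (a - b)"
  then show "cls a = cls b" unfolding cls_def
    by (auto simp: set_eq_iff) (metis Zv_sym Zv_trans)+
qed

lemma fin_cls: "finite (cls ` S)"
  using Zv_fin unfolding cls_def[abs_def] by (rule finite_subset[rotated]) auto

lemma sm_zero1[simp]: "sm 0 v = 0"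
  using sm_add1[of 0 0 v] by simp
lemma sm_zero2[simp]: "sm a 0 = 0"
  using sm_add2[of a 0 0] by simp
lemma sm_neg1: "sm (- a) v = - sm a v"
proof -
  have "sm a v + sm (-a) v = 0" using sm_add1[of a "-a" v] by simp
  then show ?thesis by (metis add.inverse_unique)
qed
lemma sm_diff1: "sm (a - b) v = sm a v - sm b v"
  using sm_add1[of a "-b" v] sm_neg1[of b v] by simp
lemma sm_neg2: "sm a (- v) = - sm a v"
proof -
  have "sm a v + sm a (- v) = 0" using sm_add2[of a v "-v"] by simp
  then show ?thesis by (metis add.inverse_unique)
qed
lemma sm_diff2: "sm a (v - w) = sm a v - sm a w"
  using sm_add2[of a v "-w"] sm_neg2[of a w] by simp
lemma sm_sum2: "sm a (\<Sum>i<(d::nat). f i) = (\<Sum>i<d. sm a (f i))"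
  by (induction d) (simp_all add: sm_add2)

lemma Zv_sum: "(\<And>i. i < (d::nat) \<Longrightarrow> Zv (f i)) \<Longrightarrow> Zv (\<Sum>i<d. f i)"
  by (induction d) (simp_all add: Zv0 Zv_add)

lemma comb_diff: "(\<Sum>i<(d::nat). sm (a i) (u i)) - (\<Sum>i<d. sm (b i) (u i)) = (\<Sum>i<d. sm (a i - b i) (u i))"
  by (simp add: sm_diff1 sum_subtractf)

lemma comb_cong: "(\<And>i. i < (d::nat) \<Longrightarrow> Zs (a i - b i)) \<Longrightarrow>
   Zv ((\<Sum>i<d. sm (a i) (u i)) - (\<Sum>i<d. sm (b i) (u i)))"
  unfolding comb_diff by (rule Zv_sum) (rule sm_Zs, simp)

definition indep :: "(nat \<Rightarrow> 'v) \<Rightarrow> nat \<Rightarrow> bool" where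
  "indep u d \<longleftrightarrow> (\<forall>a. Zv (\<Sum>i<d. sm (a i) (u i)) \<longrightarrow> (\<forall>i<d. Zs (a i)))"

definition spans :: "'v set \<Rightarrow> (nat \<Rightarrow> 'v) \<Rightarrow> nat \<Rightarrow> bool" where
  "spans S u r \<longleftrightarrow> (\<forall>s\<in>S. \<exists>a. Zv (s - (\<Sum>i<r. sm (a i) (u i))))"

definition subm :: "'v set \<Rightarrow> bool" where
  "subm S \<longleftrightarrow> 0 \<in> S \<and> (\<forall>v\<in>S. \<forall>w\<in>S. v + w \<in> S) \<and> (\<forall>a. \<forall>v\<in>S. sm a v \<in> S)"

lemma subm_sum: "subm S \<Longrightarrow> (\<And>i. i < (d::nat) \<Longrightarrow> u i \<in> S) \<Longrightarrow> (\<Sum>i<d. sm (a i) (u i)) \<in> S"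
  by (induction d) (auto simp: subm_def)

definition enc :: "(nat \<Rightarrow> 'v) \<Rightarrow> nat \<Rightarrow> (nat \<Rightarrow> 's set) \<Rightarrow> 'v set" where
  "enc u d f = cls (\<Sum>i<d. sm (rp (f i)) (u i))"

lemma card_Pi: "card (PiE {..<(d::nat)} (\<lambda>_. range clsS)) = qq ^ d"
  by (simp add: card_PiE qq_def)

lemma fin_Pi: "finite (PiE {..<(d::nat)} (\<lambda>_. range clsS))"
  by (rule finite_PiE) (auto simp: fin_clsS)

lemma L_F:
  assumes S: "subm S" and u: "\<And>i. i < d \<Longrightarrow> u i \<in> S" and ind: "indep u d"
  shows "qq ^ d \<le> cnt S"
proof -
  have inj: "inj_on (enc u d) (PiE {..<d} (\<lambda>_. range clsS))"
  proof
    fix f g assume f: "f \<in> PiE {..<d} (\<lambda>_. range clsS)" and g: "g \<in> PiE {..<d} (\<lambda>_. range clsS)"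
      and e: "enc u d f = enc u d g"
    from e have zv: "Zv (\<Sum>i<d. sm (rp (f i) - rp (g i)) (u i))"
      unfolding enc_def cls_eq comb_diff .
    have z: "\<And>i. i < d \<Longrightarrow> Zs (rp (f i) - rp (g i))"
      using ind[unfolded indep_def, rule_format, of "\<lambda>i. rp (f i) - rp (g i)"] zv by simp
    show "f = g"
    proof (rule PiE_ext[OF f g])
      fix i assume "i \<in> {..<d}"
      then have i: "i < d" by simp
      from f i obtain a where a: "f i = clsS a" by auto
      from g i obtain b where b: "g i = clsS b" by auto
      have "Zs (a - b)"
        using z[OF i] rp_cls[of a] rp_cls[of b] unfolding a b
        by (meson Zs_sym Zs_trans)
      then show "f i = g i" unfolding a b clsS_eq .
    qed
  qed
  have sub: "enc u d ` PiE {..<d} (\<lambda>_. range clsS) \<subseteq> cls ` S"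
  proof (rule image_subsetI)
    fix f assume "f \<in> PiE {..<d} (\<lambda>_. range clsS)"
    show "enc u d f \<in> cls ` S" unfolding enc_def by (rule imageI, rule subm_sum[OF S u])
  qed
  have "qq ^ d = card (enc u d ` PiE {..<d} (\<lambda>_. range clsS))"
    using card_image[OF inj] card_Pi by simp
  also have "\<dots> \<le> cnt S" unfolding cnt_def by (rule card_mono[OF fin_cls sub])
  finally show ?thesis .
qed

lemma L_B:
  assumes sp: "spans S u r"
  shows "cnt S \<le> qq ^ r"
proof -
  have sub: "cls ` S \<subseteq> enc u r ` PiE {..<r} (\<lambda>_. range clsS)"
  proof
    fix X assume "X \<in> cls ` S"
    then obtain s where s: "s \<in> S" and X: "X = cls s" by auto
    from sp s obtain a where a: "Zv (s - (\<Sum>i<r. sm (a i) (u i)))" unfolding spans_def by blast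
    let ?f = "restrict (\<lambda>i. clsS (a i)) {..<r}"
    have f: "?f \<in> PiE {..<r} (\<lambda>_. range clsS)" by auto
    have "Zv ((\<Sum>i<r. sm (a i) (u i)) - (\<Sum>i<r. sm (rp (?f i)) (u i)))"
    proof (rule comb_cong)
      fix i assume "i < r"
      then show "Zs (a i - rp (?f i))" using rp_cls[of "a i"] Zs_sym by simp
    qed
    with a have "Zv (s - (\<Sum>i<r. sm (rp (?f i)) (u i)))" by (rule Zv_trans)
    then have "X = enc u r ?f" unfolding X enc_def cls_eq .
    with f show "X \<in> enc u r ` PiE {..<r} (\<lambda>_. range clsS)" by blast
  qed
  have "cnt S \<le> card (enc u r ` PiE {..<r} (\<lambda>_. range clsS))"
    unfolding cnt_def by (rule card_mono[OF finite_imageI[OF fin_Pi] sub])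
  also have "\<dots> \<le> card (PiE {..<r} (\<lambda>_. range clsS))" by (rule card_image_le[OF fin_Pi])
  finally show ?thesis using card_Pi by simp
qed

end


context fmod begin

lemma sum_upd_Suc: "(\<Sum>i<Suc r. sm (a i) ((u(r := s)) i)) = (\<Sum>i<r. sm (a i) (u i)) + sm (a r) s"
proof -
  have "(\<Sum>i<r. sm (a i) ((u(r := s)) i)) = (\<Sum>i<r. sm (a i) (u i))"
    by (rule sum.cong) auto
  then show ?thesis by simp
qed

lemma L_Ext:
  assumes ind: "indep u r" and ns: "\<not> (\<exists>a. Zv (s - (\<Sum>i<r. sm (a i) (u i))))"
  shows "indep (u(r := s)) (Suc r)"
  unfolding indep_def
proof (rule allI, rule impI)
  fix a assume z0: "Zv (\<Sum>i<Suc r. sm (a i) ((u(r := s)) i))"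
  let ?X = "\<Sum>i<r. sm (a i) (u i)"
  have z: "Zv (?X + sm (a r) s)" using z0 unfolding sum_upd_Suc .
  show "\<forall>i<Suc r. Zs (a i)"
  proof (cases "Zs (a r)")
    case True
    then have "Zv (sm (a r) s)" by (rule sm_Zs)
    then have "Zv ((?X + sm (a r) s) - sm (a r) s)" using z Zv_diff by blast
    then have "Zv ?X" by simp
    then have "\<forall>i<r. Zs (a i)" using ind[unfolded indep_def, rule_format, of a] by blast
    with True show "\<forall>i<Suc r. Zs (a i)" by (auto simp: less_Suc_eq)
  next
    case False
    then obtain b where b: "Zs (a r * b - 1)" using Zs_inv by blast
    have z1: "Zv (sm b (?X + sm (a r) s))" using z by (rule sm_Zv)
    have e1: "sm b (?X + sm (a r) s) = (\<Sum>i<r. sm (b * a i) (u i)) + sm (a r * b) s"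
      by (simp add: sm_add2 sm_sum2 sm_mult mult.commute)
    have z2: "Zv (sm (a r * b) s - s)" using sm_Zs[OF b, of s] by (simp add: sm_diff1 sm_one)
    have e2: "s - (\<Sum>i<r. sm (- (b * a i)) (u i)) =
       ((\<Sum>i<r. sm (b * a i) (u i)) + sm (a r * b) s) - (sm (a r * b) s - s)"
      by (simp add: sm_neg1 sum_negf)
    have "Zv (s - (\<Sum>i<r. sm (- (b * a i)) (u i)))"
      unfolding e2 using z1 z2 e1 Zv_diff by metis
    then show "\<forall>i<Suc r. Zs (a i)" using ns[unfolded not_ex, rule_format, of "\<lambda>i. - (b * a i)"] by simp
  qed
qed

lemma bound:
  assumes S: "subm S" and u: "\<And>i. i < r \<Longrightarrow> u i \<in> S" and ind: "indep u r"
  shows "r < card (range cls)"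
proof -
  have "qq ^ r \<le> cnt S" by (rule L_F[OF S u ind])
  also have "\<dots> \<le> card (range cls)" unfolding cnt_def
    by (rule card_mono[OF fin_cls]) auto
  finally have a: "qq ^ r \<le> card (range cls)" .
  have "r < 2 ^ r" by (rule less_exp)
  also have "(2::nat) ^ r \<le> qq ^ r" using qq_ge2 by (rule power_mono) simp
  finally show ?thesis using a by simp
qed

lemma max_family:
  assumes S: "subm S"
  shows "\<exists>r u. (\<forall>i<r. u i \<in> S) \<and> indep u r \<and> spans S u r"
proof -
  define P where "P r \<longleftrightarrow> (\<exists>u. (\<forall>i<r. u i \<in> S) \<and> indep u r)" for r
  have P0: "P 0" by (auto simp: P_def indep_def)
  have bd: "\<forall>r. P r \<longrightarrow> r \<le> card (range cls)"
    using bound[OF S] unfolding P_def by (meson less_imp_le)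
  define r where "r = (GREATEST r. P r)"
  have "P r" unfolding r_def using GreatestI_nat[of P 0 "card (range cls)"] P0 bd by blast
  then obtain u where u1: "\<forall>i<r. u i \<in> S" and u2: "indep u r" unfolding P_def by blast
  have "spans S u r"
    unfolding spans_def
  proof
    fix s assume s: "s \<in> S"
    show "\<exists>a. Zv (s - (\<Sum>i<r. sm (a i) (u i)))"
    proof (rule ccontr)
      assume ns: "\<not> (\<exists>a. Zv (s - (\<Sum>i<r. sm (a i) (u i))))"
      have "P (Suc r)" unfolding P_def
        using L_Ext[OF u2 ns] u1 s by (intro exI[of _ "u(r := s)"]) (auto simp: less_Suc_eq)
      have "Suc r \<le> (GREATEST r. P r)"
        by (rule Greatest_le_nat[of P "Suc r" "card (range cls)"]) (use \<open>P (Suc r)\<close> bd in auto)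
      then show False by (simp add: r_def)
    qed
  qed
  with u1 u2 show ?thesis by blast
qed

lemma indep_le:
  assumes ind: "indep u r" and dr: "d \<le> r"
  shows "indep u d"
  unfolding indep_def
proof (rule allI, rule impI)
  fix a assume z: "Zv (\<Sum>i<d. sm (a i) (u i))"
  define a' where "a' i = (if i < d then a i else 0)" for i
  have "(\<Sum>i<r. sm (a' i) (u i)) = (\<Sum>i<d. sm (a i) (u i))"
    by (rule sum.mono_neutral_cong_right) (use dr in \<open>auto simp: a'_def\<close>)
  with z have "Zv (\<Sum>i<r. sm (a' i) (u i))" by simp
  then have ar: "\<forall>i<r. Zs (a' i)" using ind[unfolded indep_def, rule_format, of a'] by blast
  show "\<forall>i<d. Zs (a i)"
  proof (intro allI impI)
    fix i assume i: "i < d"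
    with dr have "i < r" by simp
    with ar have "Zs (a' i)" by blast
    with i show "Zs (a i)" by (simp add: a'_def)
  qed
qed

lemma Dim:
  assumes S: "subm S"
  shows "(\<exists>u. (\<forall>i<d. u i \<in> S) \<and> indep u d) \<longleftrightarrow> qq ^ d \<le> cnt S"
proof
  assume "\<exists>u. (\<forall>i<d. u i \<in> S) \<and> indep u d"
  then show "qq ^ d \<le> cnt S" using L_F[OF S] by blast
next
  assume a: "qq ^ d \<le> cnt S"
  obtain r u where u: "\<forall>i<r. u i \<in> S" "indep u r" "spans S u r" using max_family[OF S] by blast
  have "qq ^ d \<le> qq ^ r" using a L_B[OF u(3)] by linarith
  then have "d \<le> r" using qq_ge2 by (simp add: power_increasing_iff)
  then show "\<exists>u. (\<forall>i<d. u i \<in> S) \<and> indep u d"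
    by (intro exI[of _ u]) (use u(1) indep_le[OF u(2) \<open>d \<le> r\<close>] in auto)
qed

definition rpv :: "'v set \<Rightarrow> 'v" where "rpv X = (SOME v. v \<in> X)"

lemma rpv_cls: "Zv (w - rpv (cls w))"
proof -
  have "rpv (cls w) \<in> cls w" unfolding rpv_def by (rule someI[of _ w]) (simp add: cls_def Zv0)
  then show ?thesis by (simp add: cls_def)
qed

end

lemma fun_sum_apply: "(\<Sum>i<(d::nat). f i) (j::'b) = (\<Sum>i<d. f i j)"
  by (induction d) auto

context qfield begin

lemma Zs_cong_left: "Zs (x - y) \<Longrightarrow> Zs (x - w) \<longleftrightarrow> Zs (y - w)"
  by (metis Zs_sym Zs_trans)

lemma vec_fmod: "fmod Zs (\<lambda>v::nat \<Rightarrow> 's. \<forall>j<n. Zs (v j)) (\<lambda>a v j. a * v j)"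
  apply (rule fmod.intro)
   apply (rule qfield_axioms)
  apply (rule fmod_axioms.intro)
  subgoal by (simp add: Zs0)
  subgoal by (simp add: Zs_add)
  subgoal by (simp add: Zs_neg)
  subgoal by (simp add: Zs_mult)
  subgoal by (simp add: Zs_mult2)
  subgoal by (simp add: fun_eq_iff distrib_right)
  subgoal by (simp add: fun_eq_iff distrib_left)
  subgoal by (simp add: fun_eq_iff mult.assoc)
  subgoal by simp
proof -
  show "finite (range (\<lambda>v::nat \<Rightarrow> 's. {w. \<forall>j<n. Zs ((v - w) j)}))"
  proof (rule finite_subset)
    show "range (\<lambda>v::nat \<Rightarrow> 's. {w. \<forall>j<n. Zs ((v - w) j)}) \<subseteq>
      (\<lambda>F. {w. \<forall>j<n. Zs (rp (F j) - w j)}) ` PiE {..<n} (\<lambda>_. range clsS)"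
    proof
      fix X assume "X \<in> range (\<lambda>v::nat \<Rightarrow> 's. {w. \<forall>j<n. Zs ((v - w) j)})"
      then obtain v :: "nat \<Rightarrow> 's" where X: "X = {w. \<forall>j<n. Zs ((v - w) j)}" by auto
      let ?F = "restrict (\<lambda>j. clsS (v j)) {..<n}"
      have c: "Zs (v j - w) \<longleftrightarrow> Zs (rp (?F j) - w)" if "j < n" for j w
        using Zs_cong_left[OF Zs_sym[OF rp_cls[of "v j"]], of w] that by simp
      have "X = {w. \<forall>j<n. Zs (rp (?F j) - w j)}"
        unfolding X using c by simp
      moreover have "?F \<in> PiE {..<n} (\<lambda>_. range clsS)" by auto
      ultimately show "X \<in> (\<lambda>F. {w. \<forall>j<n. Zs (rp (F j) - w j)}) ` PiE {..<n} (\<lambda>_. range clsS)"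
        by blast
    qed
    show "finite ((\<lambda>F. {w. \<forall>j<n. Zs (rp (F j) - w j)}) ` PiE {..<n} (\<lambda>_. range clsS))"
      by (rule finite_imageI, rule finite_PiE) (auto simp: fin_clsS)
  qed
qed

end

locale qhom = F: qfield Zf + K: qfield Zk for Zf Zk :: "'r::comm_ring_1 \<Rightarrow> bool" +
  fixes \<phi> :: "'r \<Rightarrow> 'r"
  assumes phi_add: "\<phi> (a + b) = \<phi> a + \<phi> b"
    and phi_mult: "\<phi> (a * b) = \<phi> a * \<phi> b"
    and phi_one: "\<phi> 1 = 1"
    and phi_Z: "Zf a \<Longrightarrow> Zk (\<phi> a)"
begin

lemma phi_zero: "\<phi> 0 = 0" using phi_add[of 0 0] by simp
lemma phi_neg: "\<phi> (- a) = - \<phi> a"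
  using phi_add[of a "-a"] phi_zero by (metis add.inverse_unique add.right_inverse)
lemma phi_diff: "\<phi> (a - b) = \<phi> a - \<phi> b"
  using phi_add[of a "-b"] phi_neg[of b] by simp

lemma hom_fmod: "fmod Zf Zk (\<lambda>a x. \<phi> a * x)"
  apply (rule fmod.intro)
   apply (rule F.qfield_axioms)
  apply (rule fmod_axioms.intro)
  subgoal by (rule K.Zs0)
  subgoal by (rule K.Zs_add)
  subgoal by (rule K.Zs_neg)
  subgoal by (rule K.Zs_mult, rule phi_Z)
  subgoal by (rule K.Zs_mult2)
  subgoal by (simp add: phi_add distrib_right)
  subgoal by (simp add: distrib_left)
  subgoal by (simp add: phi_mult mult.assoc)
  subgoal by (simp add: phi_one)
  subgoal by (rule K.Zs_fin)
  done

end



context qfield begin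

lemma vec_bound:
  assumes ind: "fmod.indep Zs (\<lambda>v. \<forall>j<n. Zs (v j)) (\<lambda>a v j. a * v j) u d"
  shows "d \<le> n"
proof -
  interpret V: fmod Zs "\<lambda>v::nat \<Rightarrow> 's. \<forall>j<n. Zs (v j)" "\<lambda>a v j. a * v j" by (rule vec_fmod)
  have sU: "V.subm UNIV" by (simp add: V.subm_def)
  have "qq ^ d \<le> V.cnt UNIV" by (rule V.L_F[OF sU _ ind]) simp
  also have "V.cnt UNIV \<le> qq ^ n"
  proof (rule V.L_B)
    let ?ev = "\<lambda>i j. if j = i then (1::'s) else 0"
    show "V.spans UNIV ?ev n"
      unfolding V.spans_def
    proof
      fix s :: "nat \<Rightarrow> 's"
      have "(\<Sum>i<n. s i * ?ev i j) = s j" if "j < n" for j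
      proof -
        have "(\<Sum>i<n. s i * ?ev i j) = (\<Sum>i<n. if j = i then s i else 0)"
          by (rule sum.cong) auto
        then show ?thesis using that by simp
      qed
      then have "\<forall>j<n. Zs ((s - (\<Sum>i<n. (\<lambda>j. s i * ?ev i j))) j)"
        by (simp add: fun_sum_apply Zs0)
      then show "\<exists>a. \<forall>j<n. Zs ((s - (\<Sum>i<n. (\<lambda>j. a i * ?ev i j))) j)" by blast
    qed
  qed
  finally show ?thesis using qq_ge2 by (simp add: power_increasing_iff)
qed

end

locale tfield = qhom Zf Zk \<phi> for Zf Zk :: "'r::comm_ring_1 \<Rightarrow> bool" and \<phi> +
  fixes n :: nat and cr :: "(nat \<times> nat \<times> nat) list" and tf :: 'r
  assumes wf: "\<forall>(b, r, l) \<in> set cr. b < n \<and> r < n \<and> l < n"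
begin

definition SK :: "(nat \<Rightarrow> 'r) set" where
  "SK = {v. \<forall>(b, r, l) \<in> set cr. Zk (v l - \<phi> tf * v r - (1 - \<phi> tf) * v b)}"
definition SF :: "(nat \<Rightarrow> 'r) set" where
  "SF = {v. \<forall>(b, r, l) \<in> set cr. Zf (v l - tf * v r - (1 - tf) * v b)}"

sublocale VK: fmod Zk "\<lambda>v::nat \<Rightarrow> 'r. \<forall>j<n. Zk (v j)" "\<lambda>a v j. a * v j" by (rule K.vec_fmod)
sublocale VF: fmod Zf "\<lambda>v::nat \<Rightarrow> 'r. \<forall>j<n. Zf (v j)" "\<lambda>a v j. a * v j" by (rule F.vec_fmod)
sublocale E: fmod Zf Zk "\<lambda>a x. \<phi> a * x" by (rule hom_fmod)

lemma lin_eq: "(v + w) l - t * (v + w) r - (1 - t) * (v + w) b =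
   (v l - t * v r - (1 - t) * v b) + (w l - t * w r - (1 - t) * w b)"
  for v w :: "nat \<Rightarrow> 'r" by (simp add: algebra_simps)

lemma lin_eq2: "a * v l - t * (a * v r) - (1 - t) * (a * v b) = a * (v l - t * v r - (1 - t) * v b)"
  for v :: "nat \<Rightarrow> 'r" by (simp add: algebra_simps)

lemma subm_SK: "VK.subm SK"
  unfolding VK.subm_def
proof (intro conjI ballI allI)
  show "0 \<in> SK" by (simp add: SK_def K.Zs0)
  fix v w assume v: "v \<in> SK" and w: "w \<in> SK"
  show "v + w \<in> SK" unfolding SK_def
  proof (clarify)
    fix b r l assume brl: "(b, r, l) \<in> set cr"
    show "Zk ((v + w) l - \<phi> tf * (v + w) r - (1 - \<phi> tf) * (v + w) b)"
      unfolding lin_eq by (rule K.Zs_add) (use v w brl in \<open>auto simp: SK_def\<close>)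
  qed
next
  fix a v assume v: "v \<in> SK"
  show "(\<lambda>j. a * v j) \<in> SK" unfolding SK_def
  proof (clarify)
    fix b r l assume brl: "(b, r, l) \<in> set cr"
    show "Zk (a * v l - \<phi> tf * (a * v r) - (1 - \<phi> tf) * (a * v b))"
      unfolding lin_eq2 by (rule K.Zs_mult2) (use v brl in \<open>auto simp: SK_def\<close>)
  qed
qed

lemma subm_SF: "VF.subm SF"
  unfolding VF.subm_def
proof (intro conjI ballI allI)
  show "0 \<in> SF" by (simp add: SF_def F.Zs0)
  fix v w assume v: "v \<in> SF" and w: "w \<in> SF"
  show "v + w \<in> SF" unfolding SF_def
  proof (clarify)
    fix b r l assume brl: "(b, r, l) \<in> set cr"
    show "Zf ((v + w) l - tf * (v + w) r - (1 - tf) * (v + w) b)"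
      unfolding lin_eq by (rule F.Zs_add) (use v w brl in \<open>auto simp: SF_def\<close>)
  qed
next
  fix a v assume v: "v \<in> SF"
  show "(\<lambda>j. a * v j) \<in> SF" unfolding SF_def
  proof (clarify)
    fix b r l assume brl: "(b, r, l) \<in> set cr"
    show "Zf (a * v l - tf * (a * v r) - (1 - tf) * (a * v b))"
      unfolding lin_eq2 by (rule F.Zs_mult2) (use v brl in \<open>auto simp: SF_def\<close>)
  qed
qed

lemma sum_lin: "(\<Sum>k<(m::nat). (X k - t * Y k - (1 - t) * Z k) * e k) =
  (\<Sum>k<m. X k * e k) - t * (\<Sum>k<m. Y k * e k) - (1 - t) * (\<Sum>k<m. Z k * e k)"
  for X Y Z e :: "nat \<Rightarrow> 'r"
  by (induction m) (simp_all add: algebra_simps)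

lemma L_psi:
  assumes ind: "E.indep e m" and sp: "E.spans UNIV e m"
  shows "VK.cnt SK \<le> VF.cnt SF ^ m"
proof -
  define \<Psi> where "\<Psi> G = VK.cls (\<lambda>j. \<Sum>k<m. \<phi> (VF.rpv (G k) j) * e k)" for G :: "nat \<Rightarrow> (nat \<Rightarrow> 'r) set"
  have sub: "VK.cls ` SK \<subseteq> \<Psi> ` PiE {..<m} (\<lambda>_. VF.cls ` SF)"
  proof
    fix X assume "X \<in> VK.cls ` SK"
    then obtain v where v: "v \<in> SK" and X: "X = VK.cls v" by auto
    have "\<forall>j. \<exists>a. Zk (v j - (\<Sum>k<m. \<phi> (a k) * e k))"
      using sp unfolding E.spans_def by blast
    then obtain A where A: "\<And>j. Zk (v j - (\<Sum>k<m. \<phi> (A j k) * e k))"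
      by metis
    define w where "w k = (\<lambda>j. A j k)" for k
    define S where "S j = (\<Sum>k<m. \<phi> (A j k) * e k)" for j
    have wSF: "w k \<in> SF" if k: "k < m" for k
      unfolding SF_def
    proof (clarify)
      fix b r l assume brl: "(b, r, l) \<in> set cr"
      define c where "c k = A l k - tf * A r k - (1 - tf) * A b k" for k
      have e1: "(\<Sum>k<m. \<phi> (c k) * e k) = S l - \<phi> tf * S r - (1 - \<phi> tf) * S b"
      proof -
        have "\<phi> (c k) = \<phi> (A l k) - \<phi> tf * \<phi> (A r k) - (1 - \<phi> tf) * \<phi> (A b k)" for k
          by (simp add: c_def phi_diff phi_mult phi_one)
        then show ?thesis unfolding S_def by (simp add: sum_lin)
      qed
      have zv: "Zk (v l - \<phi> tf * v r - (1 - \<phi> tf) * v b)" using v brl unfolding SK_def by auto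
      have e2: "S l - \<phi> tf * S r - (1 - \<phi> tf) * S b =
        (v l - \<phi> tf * v r - (1 - \<phi> tf) * v b) - ((v l - S l) - \<phi> tf * (v r - S r) - (1 - \<phi> tf) * (v b - S b))"
        by (simp add: algebra_simps)
      have zz: "Zk ((v l - S l) - \<phi> tf * (v r - S r) - (1 - \<phi> tf) * (v b - S b))"
      proof -
        have a1: "Zk (v l - S l)" "Zk (v r - S r)" "Zk (v b - S b)" using A unfolding S_def by auto
        show ?thesis by (rule K.Zs_diff[OF K.Zs_diff[OF a1(1) K.Zs_mult2[OF a1(2)]] K.Zs_mult2[OF a1(3)]])
      qed
      have "Zk (\<Sum>k<m. \<phi> (c k) * e k)" unfolding e1 e2 using zv zz by (rule K.Zs_diff)
      then have "\<forall>k<m. Zf (c k)" using ind[unfolded E.indep_def, rule_format, of c] by blast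
      then show "Zf (w k l - tf * w k r - (1 - tf) * w k b)" using k by (simp add: w_def c_def)
    qed
    let ?G = "restrict (\<lambda>k. VF.cls (w k)) {..<m}"
    have G: "?G \<in> PiE {..<m} (\<lambda>_. VF.cls ` SF)" using wSF by auto
    have "X = \<Psi> ?G"
      unfolding X \<Psi>_def VK.cls_eq
    proof (intro allI impI)
      fix j assume j: "j < n"
      have d: "Zk (\<phi> (A j k) - \<phi> (VF.rpv (?G k) j))" if k: "k < m" for k
      proof -
        have "\<forall>j<n. Zf ((w k - VF.rpv (VF.cls (w k))) j)" by (rule VF.rpv_cls)
        with j k have "Zf (A j k - VF.rpv (?G k) j)" by (simp add: w_def)
        then show ?thesis unfolding phi_diff[symmetric] by (rule phi_Z)
      qed
      have e3: "(v - (\<lambda>j. \<Sum>k<m. \<phi> (VF.rpv (?G k) j) * e k)) j =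
         (v j - S j) + (\<Sum>k<m. (\<phi> (A j k) - \<phi> (VF.rpv (?G k) j)) * e k)"
        unfolding S_def by (simp add: algebra_simps sum_subtractf)
      show "Zk ((v - (\<lambda>j. \<Sum>k<m. \<phi> (VF.rpv (?G k) j) * e k)) j)"
        unfolding e3
      proof (rule K.Zs_add)
        show "Zk (v j - S j)" using A unfolding S_def .
        show "Zk (\<Sum>k<m. (\<phi> (A j k) - \<phi> (VF.rpv (?G k) j)) * e k)"
          by (rule E.Zv_sum) (use d in \<open>auto intro: K.Zs_mult\<close>)
      qed
    qed
    with G show "X \<in> \<Psi> ` PiE {..<m} (\<lambda>_. VF.cls ` SF)" by blast
  qed
  have finP: "finite (PiE {..<m} (\<lambda>_. VF.cls ` SF))"
    by (rule finite_PiE) (auto simp: VF.fin_cls)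
  have "VK.cnt SK \<le> card (\<Psi> ` PiE {..<m} (\<lambda>_. VF.cls ` SF))"
    unfolding VK.cnt_def by (rule card_mono[OF finite_imageI[OF finP] sub])
  also have "\<dots> \<le> card (PiE {..<m} (\<lambda>_. VF.cls ` SF))" by (rule card_image_le[OF finP])
  also have "\<dots> = VF.cnt SF ^ m" by (simp add: card_PiE VF.cnt_def)
  finally show ?thesis .
qed

lemma main_transfer:
  assumes "\<exists>u. (\<forall>i<d. u i \<in> SK) \<and> VK.indep u d"
  shows "\<exists>w. (\<forall>i<d. w i \<in> SF) \<and> VF.indep w d"
proof -
  have sU: "E.subm UNIV" by (simp add: E.subm_def)
  obtain m e where e: "\<forall>i<m. e i \<in> UNIV" "E.indep e m" "E.spans UNIV e m"
    using E.max_family[OF sU] by blast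
  have clsK: "E.cls = K.clsS" by (simp add: fun_eq_iff E.cls_def K.clsS_def)
  have h1: "F.qq ^ m \<le> K.qq" using E.L_F[OF sU _ e(2)] by (simp add: E.cnt_def clsK K.qq_def)
  have h2: "K.qq \<le> F.qq ^ m" using E.L_B[OF e(3)] by (simp add: E.cnt_def clsK K.qq_def)
  have m: "m > 0"
  proof (rule ccontr)
    assume "\<not> m > 0" then have "m = 0" by simp
    with h2 K.qq_ge2 show False by simp
  qed
  have h3: "K.qq ^ d \<le> VK.cnt SK" using assms VK.Dim[OF subm_SK] by blast
  have h4: "VK.cnt SK \<le> VF.cnt SF ^ m" by (rule L_psi[OF e(2) e(3)])
  have "(F.qq ^ d) ^ m = (F.qq ^ m) ^ d" by (simp add: power_mult[symmetric] mult.commute)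
  also have "\<dots> \<le> K.qq ^ d" by (rule power_mono[OF h1]) simp
  also have "\<dots> \<le> VF.cnt SF ^ m" using h3 h4 by simp
  finally have pw: "(F.qq ^ d) ^ m \<le> VF.cnt SF ^ m" .
  from m obtain m' where m': "m = Suc m'" by (cases m) auto
  have "F.qq ^ d \<le> VF.cnt SF" by (rule power_le_imp_le_base[of _ m']) (use pw m' in auto)
  then show ?thesis using VF.Dim[OF subm_SF] by blast
qed

end



lemma mod_helper: "(x - y * (z mod m)) mod m = (x - y * z) mod (m::int)"
  by (metis mod_diff_right_eq mod_mult_right_eq)

context poly_mod_prime begin

definition Ip :: "int poly \<Rightarrow> bool" where "Ip x \<longleftrightarrow> Mp x = 0"

lemma Ip0[simp]: "Ip 0" by (simp add: Ip_def)
lemma Ip_add: "Ip a \<Longrightarrow> Ip b \<Longrightarrow> Ip (a + b)"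
  unfolding Ip_def by (metis Mp_0 add_0 plus_Mp(1) plus_Mp(2))
lemma Ip_mult: "Ip a \<Longrightarrow> Ip (a * b)"
  unfolding Ip_def by (metis Mp_0 mult_Mp(1) mult_zero_left)
lemma Ip_mult2: "Ip b \<Longrightarrow> Ip (a * b)"
  using Ip_mult[of b a] by (simp add: mult.commute)
lemma Ip_neg: "Ip a \<Longrightarrow> Ip (- a)"
  using Ip_mult[of a "-1"] by simp
lemma Ip_diff: "Ip a \<Longrightarrow> Ip b \<Longrightarrow> Ip (a - b)"
  using Ip_add[of a "-b"] Ip_neg[of b] by simp
lemma Ip_smult: "Ip (smult p w)" by (simp add: Ip_def)
lemma Ip_iff: "f =m g \<longleftrightarrow> Ip (f - g)"
  unfolding Ip_def by (metis Mp_0 diff_self minus_Mp(1) diff_add_cancel plus_Mp(1) add_0)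
lemma Ip_Mp: "Ip (f - Mp f)" using Ip_iff[of f "Mp f"] by simp
lemma Ip_Mp2: "Ip (Mp f - f)" using Ip_iff[of "Mp f" f] by simp
lemma Ip_eq_smult: "Ip x \<Longrightarrow> x = smult p (Dp x)"
  using Dp_Mp_eq[of x] by (simp add: Ip_def)

lemma dvdm_iff: "f dvdm x \<longleftrightarrow> (\<exists>q. Ip (x - f * q))"
  unfolding dvdm_def Ip_iff ..

lemma M_lt: "0 \<le> M x \<and> M x < p"
  unfolding M_def using m1 by simp

lemma inv_exists: assumes "\<not> p dvd c" shows "\<exists>c'. M (c' * c) = 1"
proof -
  note cp = prime_imp_coprime[OF prime assms]
  have "comm_monoid_mult_class.coprime c p"
  proof (rule comm_monoid_mult_class.coprimeI)
    fix r assume "r dvd c" "r dvd p"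
    then show "r dvd 1" using coprime_common_divisor[OF cp] by blast
  qed
  then show ?thesis using inverse_mod_coprime[OF prime] by blast
qed

lemma M_eq0_dvd: "M x = 0 \<longleftrightarrow> p dvd x"
  unfolding M_def by (simp add: dvd_eq_mod_eq_0)

lemma lc_not_dvd: assumes "Mp e \<noteq> 0" shows "\<not> p dvd lead_coeff (Mp e)"
proof
  assume "p dvd lead_coeff (Mp e)"
  then have "M (lead_coeff (Mp e)) = 0" by (simp add: M_eq0_dvd)
  moreover have "M (lead_coeff (Mp e)) = lead_coeff (Mp e)" by (simp add: Mp_coeff)
  ultimately show False using assms by simp
qed

definition mu :: "int poly \<Rightarrow> nat" where
  "mu f = (if Mp f = 0 then 0 else Suc (degree (Mp f)))"

lemma high_coeffs_zero:
  assumes "\<And>i. i \<ge> N \<Longrightarrow> coeff (Mp f) i = 0"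
  shows "mu f \<le> N"
proof (cases "Mp f = 0")
  case True then show ?thesis by (simp add: mu_def)
next
  case False
  then have "coeff (Mp f) (degree (Mp f)) \<noteq> 0" by simp
  then have "degree (Mp f) < N" using assms by (meson not_less)
  with False show ?thesis by (simp add: mu_def)
qed

lemma div_exists:
  assumes e: "Mp e \<noteq> 0"
  shows "\<exists>q r. Ip (f - (e * q + r)) \<and> (Mp r = 0 \<or> degree (Mp r) < degree (Mp e))"
proof (induction "mu f" arbitrary: f rule: less_induct)
  case less
  define D where "D = degree (Mp e)"
  define c where "c = lead_coeff (Mp e)"
  obtain c' where c': "M (c' * c) = 1" using inv_exists lc_not_dvd[OF e] unfolding c_def by blast
  show ?case
  proof (cases "Mp f = 0 \<or> degree (Mp f) < D")
    case True
    then show ?thesis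
      by (intro exI[of _ 0] exI[of _ "Mp f"]) (auto simp: Ip_Mp D_def)
  next
    case False
    define N where "N = degree (Mp f)"
    define a where "a = lead_coeff (Mp f)"
    have ND: "D \<le> N" using False by (simp add: N_def)
    have f0: "Mp f \<noteq> 0" using False by simp
    define X where "X = monom (a * c') (N - D) * e"
    define f1 where "f1 = f - X"
    have cX: "coeff X i = (if i < N - D then 0 else a * c' * coeff e (i - (N - D)))" for i
      by (simp add: X_def coeff_monom_mult)
    have z: "coeff (Mp f1) i = 0" if i: "i \<ge> N" for i
    proof (cases "i = N")
      case True
      have Mf: "M (coeff f N) = a" by (simp add: a_def N_def Mp_coeff[symmetric])
      have Me: "M (coeff e D) = c" by (simp add: c_def D_def Mp_coeff[symmetric])
      have nd: "\<not> N < N - D" "N - (N - D) = D" using ND by auto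
      have "coeff (Mp f1) N = M (coeff f N - a * c' * coeff e D)"
        by (simp add: Mp_coeff f1_def cX nd)
      also have "\<dots> = M (M (coeff f N) - (a * c') * M (coeff e D))"
        unfolding M_def by (simp add: mod_simps mod_helper)
      also have "\<dots> = M (a - a * (c' * c))" unfolding Mf Me by (simp add: mult.assoc)
      also have "\<dots> = M (a * (1 - c' * c))" by (simp add: right_diff_distrib)
      also have "\<dots> = M (a * M (1 - c' * c))" by (simp only: M_times)
      also have "M (1 - c' * c) = M (1 - M (c' * c))" by (simp only: M_minus)
      also have "\<dots> = 0" unfolding c' by simp
      finally show ?thesis using True by simp
    next
      case False
      with i have iN: "i > N" by simp
      have "M (coeff f i) = 0" using iN by (simp add: Mp_coeff[symmetric] N_def coeff_eq_0)
      moreover have "M (coeff e (i - (N - D))) = 0"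
        using iN ND by (simp add: Mp_coeff[symmetric] D_def coeff_eq_0)
      moreover have "M (coeff f i - a * c' * coeff e (i - (N - D))) =
         M (M (coeff f i) - a * c' * M (coeff e (i - (N - D))))"
        unfolding M_def by (simp add: mod_simps mod_helper)
      ultimately have "M (coeff f i - a * c' * coeff e (i - (N - D))) = 0"
        by simp
      then show ?thesis using iN ND by (simp add: Mp_coeff f1_def cX)
    qed
    have "mu f1 \<le> N" by (rule high_coeffs_zero) (use z in auto)
    also have "N < mu f" using f0 by (simp add: mu_def N_def)
    finally obtain q1 r1 where qr: "Ip (f1 - (e * q1 + r1))" "Mp r1 = 0 \<or> degree (Mp r1) < degree (Mp e)"
      using less by blast
    have eqq: "f - (e * (q1 + monom (a * c') (N - D)) + r1) = f1 - (e * q1 + r1)"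
      by (simp add: f1_def X_def algebra_simps)
    show ?thesis
      by (rule exI[of _ "q1 + monom (a * c') (N - D)"], rule exI[of _ r1]) (unfold eqq, use qr in blast)
  qed
qed

end



context poly_mod_prime begin

lemma dvdm_Ip: "Ip x \<Longrightarrow> h dvdm x"
  unfolding dvdm_iff by (rule exI[of _ 0]) simp

lemma dvdm_mult_right: "h dvdm a \<Longrightarrow> h dvdm (a * b)"
proof -
  assume "h dvdm a"
  then obtain q where q: "Ip (a - h * q)" unfolding dvdm_iff by blast
  have "a * b - h * (q * b) = (a - h * q) * b" by (simp add: algebra_simps)
  then have "Ip (a * b - h * (q * b))" using Ip_mult[OF q] by simp
  then show "h dvdm (a * b)" unfolding dvdm_iff by blast
qed

lemma dvdm_diff: "h dvdm a \<Longrightarrow> h dvdm b \<Longrightarrow> h dvdm (a - b)"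
  using dvdm_add[of h a "-b"] by simp

lemma dvdm_Ip_cong: "h dvdm x \<Longrightarrow> Ip (y - x) \<Longrightarrow> h dvdm y"
  using dvdm_add[of h "y - x" x] dvdm_Ip[of "y - x" h] by simp

lemma dvdm_one_iff: "q dvdm 1 \<longleftrightarrow> (\<exists>s. Ip (1 - q * s))"
  by (rule dvdm_iff)

lemma field_h:
  assumes irr: "irreducible_m h" and na: "\<not> h dvdm a"
  shows "\<exists>b. h dvdm (a * b - 1)"
proof -
  define inJ where "inJ x \<longleftrightarrow> (\<exists>u v. Ip (x - (u * a + v * h)))" for x
  have Ja: "inJ a" unfolding inJ_def by (rule exI[of _ 1], rule exI[of _ 0]) simp
  have Jh: "inJ h" unfolding inJ_def by (rule exI[of _ 0], rule exI[of _ 1]) simp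
  have Jsub: "inJ (x - y * k)" if xJ: "inJ x" and yJ: "inJ y" for x y k
  proof -
    obtain u1 v1 where 1: "Ip (x - (u1 * a + v1 * h))" using xJ unfolding inJ_def by blast
    obtain u2 v2 where 2: "Ip (y - (u2 * a + v2 * h))" using yJ unfolding inJ_def by blast
    have eq: "x - y * k - ((u1 - u2 * k) * a + (v1 - v2 * k) * h) =
      (x - (u1 * a + v1 * h)) - (y - (u2 * a + v2 * h)) * k" by (simp add: algebra_simps)
    have "Ip (x - y * k - ((u1 - u2 * k) * a + (v1 - v2 * k) * h))"
      unfolding eq by (rule Ip_diff[OF 1 Ip_mult[OF 2]])
    then show ?thesis unfolding inJ_def by blast
  qed
  have JIp: "inJ y" if xJ: "inJ x" and yx: "Ip (y - x)" for x y
  proof -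
    obtain u v where 1: "Ip (x - (u * a + v * h))" using xJ unfolding inJ_def by blast
    have eq: "y - (u * a + v * h) = (y - x) + (x - (u * a + v * h))" by simp
    have "Ip (y - (u * a + v * h))" unfolding eq by (rule Ip_add[OF yx 1])
    then show ?thesis unfolding inJ_def by blast
  qed
  have a0: "Mp a \<noteq> 0"
  proof
    assume "Mp a = 0" then have "Ip a" by (simp add: Ip_def)
    then show False using na dvdm_Ip by blast
  qed
  define P where "P d \<longleftrightarrow> (\<exists>e. inJ e \<and> Mp e \<noteq> 0 \<and> degree (Mp e) = d)" for d
  have "P (degree (Mp a))" unfolding P_def using Ja a0 by blast
  then have "P (LEAST d. P d)" by (rule LeastI)
  then obtain e where e: "inJ e" "Mp e \<noteq> 0" "degree (Mp e) = (LEAST d. P d)"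
    unfolding P_def by blast
  have minl: "degree (Mp e) \<le> degree (Mp r)" if "inJ r" "Mp r \<noteq> 0" for r
    unfolding e(3) by (rule Least_le) (use that in \<open>auto simp: P_def\<close>)
  have red: "\<exists>q. Ip (x - e * q)" if x: "inJ x" for x
  proof -
    obtain q r where qr: "Ip (x - (e * q + r))" "Mp r = 0 \<or> degree (Mp r) < degree (Mp e)"
      using div_exists[OF e(2)] by blast
    have "inJ (x - e * q)" by (rule Jsub[OF x e(1)])
    moreover have "Ip (r - (x - e * q))" using Ip_neg[OF qr(1)] by (simp add: algebra_simps)
    ultimately have "inJ r" by (rule JIp)
    then have "Mp r = 0" using qr(2) minl by fastforce
    then have "Ip r" by (simp add: Ip_def)
    then have "Ip ((x - (e * q + r)) + r)" by (rule Ip_add[OF qr(1)])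
    then show ?thesis by (intro exI[of _ q]) (simp add: algebra_simps)
  qed
  obtain qh where qh: "Ip (h - e * qh)" using red[OF Jh] by blast
  obtain qa where qa: "Ip (a - e * qa)" using red[OF Ja] by blast
  have "h =m e * qh" using qh by (simp add: Ip_iff)
  then have "e dvdm 1 \<or> qh dvdm 1" using irr unfolding irreducible_m_def by blast
  then show ?thesis
  proof
    assume "qh dvdm 1"
    then obtain s where s: "Ip (1 - qh * s)" unfolding dvdm_one_iff by blast
    have eq: "a - h * (s * qa) = (a - e * qa) + (1 - qh * s) * (e * qa) - (h - e * qh) * (s * qa)"
      by (simp add: algebra_simps)
    have "Ip (a - h * (s * qa))" unfolding eq
      by (rule Ip_diff[OF Ip_add[OF qa Ip_mult[OF s]] Ip_mult[OF qh]])
    then have "h dvdm a" unfolding dvdm_iff by blast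
    with na show ?thesis by blast
  next
    assume "e dvdm 1"
    then obtain s where s: "Ip (1 - e * s)" unfolding dvdm_one_iff by blast
    obtain u v where uv: "Ip (e - (u * a + v * h))" using e(1) unfolding inJ_def by blast
    have eq: "a * (u * s) - 1 - h * (- (v * s)) = - (1 - e * s) - (e - (u * a + v * h)) * s"
      by (simp add: algebra_simps)
    have "Ip (a * (u * s) - 1 - h * (- (v * s)))" unfolding eq
      by (rule Ip_diff[OF Ip_neg[OF s] Ip_mult[OF uv]])
    then have "h dvdm (a * (u * s) - 1)" unfolding dvdm_iff by blast
    then show ?thesis by blast
  qed
qed

lemma fin_h:
  assumes D: "degree_m h \<ge> 1"
  shows "finite (range (\<lambda>a. {b. h dvdm (a - b)}))"
proof -
  have h0: "Mp h \<noteq> 0" using D by auto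
  define R where "R = {r. Mp r = r \<and> degree r < degree_m h}"
  have finR: "finite R"
  proof (rule finite_imageD[of coeffs])
    have "coeffs ` R \<subseteq> {xs. set xs \<subseteq> {0..<p} \<and> length xs \<le> degree_m h}"
    proof
      fix xs assume "xs \<in> coeffs ` R"
      then obtain r where r: "r \<in> R" and xs: "xs = coeffs r" by blast
      have "set xs \<subseteq> {0..<p}" using r Mp_ident_iff' unfolding R_def xs by blast
      moreover have "length xs \<le> degree_m h"
        using r unfolding R_def xs by (cases "r = 0") (auto simp: length_coeffs_degree)
      ultimately show "xs \<in> {xs. set xs \<subseteq> {0..<p} \<and> length xs \<le> degree_m h}" by blast
    qed
    then show "finite (coeffs ` R)"
      by (rule finite_subset) (rule finite_lists_length_le, simp)
    show "inj_on coeffs R" by (rule inj_onI) (simp add: coeffs_eq_iff)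
  qed
  have sub: "range (\<lambda>a. {b. h dvdm (a - b)}) \<subseteq> (\<lambda>r. {b. h dvdm (r - b)}) ` R"
  proof
    fix X assume "X \<in> range (\<lambda>a. {b. h dvdm (a - b)})"
    then obtain a where X: "X = {b. h dvdm (a - b)}" by blast
    obtain q r where qr: "Ip (a - (h * q + r))" "Mp r = 0 \<or> degree (Mp r) < degree (Mp h)"
      using div_exists[OF h0] by blast
    have rR: "Mp r \<in> R" using qr(2) D unfolding R_def by auto
    have "Ip ((a - (h * q + r)) + (r - Mp r))" using qr(1) Ip_Mp by (rule Ip_add)
    then have "Ip (a - Mp r - h * q)" by (simp add: algebra_simps)
    then have ar: "h dvdm (a - Mp r)" unfolding dvdm_iff by blast
    have "X = {b. h dvdm (Mp r - b)}"
    proof (unfold X, rule Collect_cong)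
      fix b
      show "h dvdm (a - b) \<longleftrightarrow> h dvdm (Mp r - b)"
      proof
        assume "h dvdm (a - b)"
        from dvdm_diff[OF this ar] show "h dvdm (Mp r - b)" by simp
      next
        assume "h dvdm (Mp r - b)"
        from dvdm_add[OF ar this] show "h dvdm (a - b)" by simp
      qed
    qed
    with rR show "X \<in> (\<lambda>r. {b. h dvdm (r - b)}) ` R" by blast
  qed
  show ?thesis by (rule finite_subset[OF sub finite_imageI[OF finR]])
qed

lemma qfield_h:
  assumes irr: "irreducible_m h" and D: "degree_m h \<ge> 1"
  shows "qfield (\<lambda>x. h dvdm x)"
proof
  show "h dvdm 0" by (rule dvdm_Ip) simp
  show "h dvdm (a + b)" if "h dvdm a" "h dvdm b" for a b using dvdm_add that by blast
  show "h dvdm (a * b)" if "h dvdm a" for a b using dvdm_mult_right that by blast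
  show "\<not> h dvdm 1" using irr unfolding irreducible_m_def by blast
  show "\<exists>b. h dvdm (a * b - 1)" if "\<not> h dvdm a" for a using field_h[OF irr that] .
  show "finite (range (\<lambda>a. {b. h dvdm (a - b)}))" by (rule fin_h[OF D])
qed

end



lemma X_pow_monom: "([:0, 1:] :: 'a::comm_ring_1 poly) ^ n = monom 1 n"
  by (induction n) (simp_all add: monom_Suc monom_0)

lemma pc_X: "pcompose [:0, 1:] (T::'a::comm_ring_1 poly) = T"
  by (simp add: pcompose_pCons)

lemma pc_pow: "pcompose ([:0, 1:] ^ n) (T::'a::comm_ring_1 poly) = T ^ n"
  by (induction n) (simp_all add: pcompose_mult pcompose_1 pc_X)

context poly_mod_prime begin

lemma pc_Ip: "Ip x \<Longrightarrow> Ip (pcompose x T)"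
proof -
  assume "Ip x"
  then have "pcompose x T = pcompose (smult p (Dp x)) T" by (rule arg_cong[OF Ip_eq_smult])
  also have "\<dots> = smult p (pcompose (Dp x) T)" by (rule pcompose_smult)
  finally show ?thesis by (simp add: Ip_smult)
qed

lemma Mp_id_dvd: assumes a: "Mp g = g" and b: "p dvd coeff g k" shows "coeff g k = 0"
proof -
  have "M (coeff g k) = 0" using b by (simp add: M_eq0_dvd)
  moreover have "coeff (Mp g) k = M (coeff g k)" by (rule Mp_coeff)
  ultimately show ?thesis using a by simp
qed

lemma Mp_id_ndvd: "Mp g = g \<Longrightarrow> coeff g k \<noteq> 0 \<Longrightarrow> \<not> p dvd coeff g k"
  using Mp_id_dvd by blast

lemma Ip_const: "Ip [:x:] \<longleftrightarrow> M x = 0"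
  unfolding Ip_def by (simp add: Mp_const_poly M_def)

lemma inv_const: assumes "\<not> p dvd c" shows "\<exists>c'. Ip (1 - [:c:] * [:c':])"
proof -
  obtain c' where c': "M (c' * c) = 1" using inv_exists[OF assms] by blast
  have e1: "[:c:] * [:c':] = [:c * c':]" by simp
  have e2: "1 - [:c * c':] = [:1 - c * c':]"
    by (rule poly_eqI) (simp add: coeff_1 coeff_pCons split: nat.split)
  have m: "M (1 - c * c') = 0"
  proof -
    have "M (1 - c * c') = M (1 - M (c' * c))" by (simp add: mult.commute)
    also have "\<dots> = 0" unfolding c' by simp
    finally show ?thesis .
  qed
  have "Ip (1 - [:c:] * [:c':])" unfolding e1 e2 Ip_const by (rule m)
  then show ?thesis by blast
qed

lemma unit_deg0: assumes b0: "Mp b \<noteq> 0" and d: "degree (Mp b) = 0" shows "b dvdm 1"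
proof -
  define c where "c = coeff (Mp b) 0"
  have bc: "Mp b = [:c:]" unfolding c_def using degree_0_id[OF d] by simp
  have "c \<noteq> 0" using b0 bc by auto
  then have nd: "\<not> p dvd c" using Mp_id_ndvd[of "Mp b" 0] by (simp add: c_def)
  obtain c' where c': "Ip (1 - [:c:] * [:c':])" using inv_const[OF nd] by blast
  have "Ip (Mp b - b)" by (rule Ip_Mp2)
  then have ip: "Ip ((1 - [:c:] * [:c':]) + (Mp b - b) * [:c':])" by (rule Ip_add[OF c' Ip_mult])
  have eq: "(1 - [:c:] * [:c':]) + (Mp b - b) * [:c':] = 1 - b * [:c':]"
    unfolding bc by (simp add: algebra_simps)
  have "Ip (1 - b * [:c':])" using ip unfolding eq .
  then show ?thesis unfolding dvdm_iff by blast
qed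

lemma const_not_in:
  assumes n1: "\<not> h dvdm 1" and nd: "\<not> p dvd c"
  shows "\<not> h dvdm [:c:]"
proof
  assume hc: "h dvdm [:c:]"
  obtain c' where c': "Ip (1 - [:c:] * [:c':])" using inv_const[OF nd] by blast
  have "h dvdm [:c:] * [:c':]" by (rule dvdm_mult_right[OF hc])
  then have "h dvdm 1" using c' by (rule dvdm_Ip_cong)
  with n1 show False by blast
qed

lemma minpoly_exists:
  assumes irr: "irreducible_m h" and D: "degree_m h \<ge> 1" and c0: "\<not> p dvd coeff h 0"
  shows "\<exists>g. irreducible_m g \<and> degree_m g \<ge> 1 \<and> \<not> p dvd coeff g 0 \<and>
     (\<forall>a. g dvdm a \<longrightarrow> h dvdm pcompose a ([:0, 1:] ^ z))"
proof -
  interpret K: qfield "\<lambda>x. h dvdm x" by (rule qfield_h[OF irr D])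
  define T where "T = ([:0, 1:] :: int poly) ^ z"
  define \<phi> where "\<phi> a = pcompose a T" for a
  have phi_diff: "\<phi> (a - b) = \<phi> a - \<phi> b" for a b by (simp add: \<phi>_def pcompose_diff)
  have phi_mult: "\<phi> (a * b) = \<phi> a * \<phi> b" for a b by (simp add: \<phi>_def pcompose_mult)
  have phi_Ip: "Ip x \<Longrightarrow> Ip (\<phi> x)" for x unfolding \<phi>_def by (rule pc_Ip)
  have n1: "\<not> h dvdm 1" using irr unfolding irreducible_m_def by blast
  have ex: "\<exists>g. Mp g \<noteq> 0 \<and> h dvdm \<phi> g"
  proof -
    define f where "f i = K.clsS (T ^ i)" for i :: nat
    have "range f \<subseteq> range K.clsS" unfolding f_def by auto
    then have fr: "finite (range f)" using K.fin_clsS by (rule finite_subset)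
    have "\<not> inj f"
    proof
      assume "inj f"
      from finite_imageD[OF fr this] have "finite (UNIV :: nat set)" .
      then show False by simp
    qed
    then obtain i j where ij: "i \<noteq> j" "f i = f j" unfolding inj_def by blast
    have hij: "h dvdm (T ^ i - T ^ j)" using ij(2) unfolding f_def K.clsS_eq .
    define g0 where "g0 = ([:0, 1:] :: int poly) ^ i - [:0, 1:] ^ j"
    have "\<phi> g0 = T ^ i - T ^ j" by (simp only: g0_def \<phi>_def pcompose_diff pc_pow)
    moreover have "coeff (Mp g0) i = 1" using ij(1) unfolding g0_def X_pow_monom by (simp add: Mp_coeff)
    ultimately show ?thesis using hij by (intro exI[of _ g0]) auto
  qed
  define P where "P d \<longleftrightarrow> (\<exists>g. Mp g \<noteq> 0 \<and> h dvdm \<phi> g \<and> degree (Mp g) = d)" for d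
  from ex obtain g00 where "Mp g00 \<noteq> 0" "h dvdm \<phi> g00" by blast
  then have "P (degree (Mp g00))" unfolding P_def by blast
  then have "P (LEAST d. P d)" by (rule LeastI)
  then obtain g1 where g1: "Mp g1 \<noteq> 0" "h dvdm \<phi> g1" "degree (Mp g1) = (LEAST d. P d)"
    unfolding P_def by blast
  have minl: "degree (Mp g1) \<le> degree (Mp f)" if "Mp f \<noteq> 0" "h dvdm \<phi> f" for f
    unfolding g1(3) by (rule Least_le) (use that in \<open>auto simp: P_def\<close>)
  define g where "g = Mp g1"
  have gM: "Mp g = g" by (simp add: g_def)
  have g0: "g \<noteq> 0" using g1(1) by (simp add: g_def)
  have hg: "h dvdm \<phi> g"
  proof (rule dvdm_Ip_cong[OF g1(2)])
    show "Ip (\<phi> g - \<phi> g1)" unfolding phi_diff[symmetric] g_def by (rule phi_Ip[OF Ip_Mp2])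
  qed
  have ming: "degree g \<le> degree (Mp f)" if "Mp f \<noteq> 0" "h dvdm \<phi> f" for f
    using minl[OF that] by (simp add: g_def)
  have degg: "degree g \<ge> 1"
  proof (rule ccontr)
    assume "\<not> degree g \<ge> 1"
    then have d0: "degree g = 0" by simp
    define c where "c = coeff g 0"
    have gc: "g = [:c:]" unfolding c_def using degree_0_id[OF d0] by simp
    have "c \<noteq> 0" using g0 gc by auto
    then have "\<not> p dvd c" using Mp_id_ndvd[OF gM, of 0] by (simp add: c_def)
    moreover have "\<phi> g = [:c:]" by (simp add: gc \<phi>_def)
    moreover have "\<not> h dvdm [:c:]" by (rule const_not_in[OF n1 \<open>\<not> p dvd c\<close>])
    ultimately show False using hg by simp
  qed
  have irrg: "irreducible_m g"
    unfolding irreducible_m_def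
  proof (intro conjI allI impI)
    show "\<not> g =m 0" using gM g0 by simp
    show "\<not> g dvdm 1"
    proof
      assume "g dvdm 1"
      then obtain s where "1 =m g * s" unfolding dvdm_def by blast
      then have "degree_m 1 = degree_m g + degree_m s"
        by (intro degree_m_eq_prime) (simp_all add: prime)
      then show False using degg gM by simp
    qed
    fix a b assume gab: "g =m a * b"
    have "h dvdm \<phi> (a * b)"
    proof (rule dvdm_Ip_cong[OF hg])
      have "Ip (g - a * b)" using gab by (simp add: Ip_iff)
      from Ip_neg[OF this] have "Ip (a * b - g)" by simp
      then show "Ip (\<phi> (a * b) - \<phi> g)" unfolding phi_diff[symmetric] by (rule phi_Ip)
    qed
    then have ab: "h dvdm \<phi> a \<or> h dvdm \<phi> b" unfolding phi_mult by (rule K.domain)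
    have Mab: "Mp (a * b) \<noteq> 0" using gab gM g0 by simp
    have a0: "Mp a \<noteq> 0"
    proof
      assume "Mp a = 0" then have "Mp (a * b) = 0" using mult_Mp(1)[of a b] by simp
      with Mab show False by simp
    qed
    have b0: "Mp b \<noteq> 0"
    proof
      assume "Mp b = 0" then have "Mp (a * b) = 0" using mult_Mp(2)[of a b] by simp
      with Mab show False by simp
    qed
    have dsum: "degree_m g = degree_m a + degree_m b"
      by (rule degree_m_eq_prime) (use gM g0 gab prime in auto)
    from ab show "a dvdm 1 \<or> b dvdm 1"
    proof
      assume "h dvdm \<phi> a"
      then have "degree g \<le> degree_m a" using ming[OF a0] by blast
      then have "degree_m b = 0" using dsum gM by simp
      then show ?thesis using unit_deg0[OF b0] by blast
    next
      assume "h dvdm \<phi> b"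
      then have "degree g \<le> degree_m b" using ming[OF b0] by blast
      then have "degree_m a = 0" using dsum gM by simp
      then show ?thesis using unit_deg0[OF a0] by blast
    qed
  qed
  have cg: "\<not> p dvd coeff g 0"
  proof
    assume "p dvd coeff g 0"
    then have cz: "coeff g 0 = 0" by (rule Mp_id_dvd[OF gM])
    obtain a0 g2 where g2: "g = pCons a0 g2" by (cases g)
    have a00: "a0 = 0" using cz g2 by simp
    have g20: "g2 \<noteq> 0" using g0 g2 a00 by auto
    have g2M: "Mp g2 = g2"
    proof (rule poly_eqI)
      fix k
      have "coeff (Mp g2) k = M (coeff g (Suc k))" by (simp add: Mp_coeff g2)
      also have "\<dots> = coeff (Mp g) (Suc k)" by (simp add: Mp_coeff)
      also have "\<dots> = coeff g (Suc k)" using gM by simp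
      also have "\<dots> = coeff g2 k" by (simp add: g2)
      finally show "coeff (Mp g2) k = coeff g2 k" .
    qed
    have dg2: "degree g2 < degree g" using g2 g20 by simp
    have "\<phi> g = T * \<phi> g2" by (simp add: g2 a00 \<phi>_def pcompose_pCons)
    then have "h dvdm T * \<phi> g2" using hg by simp
    then have "h dvdm T \<or> h dvdm \<phi> g2" by (rule K.domain)
    then show False
    proof
      assume "h dvdm \<phi> g2"
      then have "degree g \<le> degree (Mp g2)" using ming[of g2] g2M g20 by simp
      then show False using dg2 g2M by simp
    next
      assume hT: "h dvdm T"
      have hX: "h dvdm [:0, 1:]"
      proof (rule ccontr)
        assume nX: "\<not> h dvdm [:0, 1:]"
        have "\<not> h dvdm [:0, 1:] ^ k" for k
        proof (induction k)
          case 0 then show ?case using n1 by simp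
        next
          case (Suc k)
          show ?case
          proof
            assume "h dvdm [:0, 1:] ^ Suc k"
            then have "h dvdm [:0, 1:] * [:0, 1:] ^ k" by simp
            then have "h dvdm [:0, 1:] \<or> h dvdm [:0, 1:] ^ k" by (rule K.domain)
            with nX Suc.IH show False by blast
          qed
        qed
        then show False using hT unfolding T_def by blast
      qed
      obtain h0 hq where hh: "h = pCons h0 hq" by (cases h)
      have "h dvdm h" unfolding dvdm_iff by (rule exI[of _ 1]) simp
      moreover have "h dvdm [:0, 1:] * hq" by (rule dvdm_mult_right[OF hX])
      ultimately have "h dvdm (h - [:0, 1:] * hq)" by (rule dvdm_diff)
      moreover have "h - [:0, 1:] * hq = [:h0:]" by (simp add: hh)
      moreover have "\<not> p dvd h0" using c0 hh by simp
      moreover have "\<not> h dvdm [:h0:]" by (rule const_not_in[OF n1 \<open>\<not> p dvd h0\<close>])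
      ultimately show False by simp
    qed
  qed
  have gh: "h dvdm \<phi> a" if ga: "g dvdm a" for a
  proof -
    obtain q where q: "Ip (a - g * q)" using ga unfolding dvdm_iff by blast
    have "h dvdm \<phi> g * \<phi> q" by (rule dvdm_mult_right[OF hg])
    moreover have "Ip (\<phi> a - \<phi> g * \<phi> q)" using phi_Ip[OF q] by (simp add: phi_diff phi_mult)
    ultimately show ?thesis by (rule dvdm_Ip_cong)
  qed
  show ?thesis
    by (rule exI[of _ g]) (use irrg degg gM cg gh in \<open>auto simp: \<phi>_def T_def\<close>)
qed

end



lemma alex_pow_eq: "alex_pow z a b = [:0, 1:] ^ z * a + (1 - [:0, 1:] ^ z) * b"
  unfolding alex_pow_def
proof (induction z)
  case 0 then show ?case by simp
next
  case (Suc z)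
  have "((\<lambda>x. alex_op x b) ^^ Suc z) a = alex_op (((\<lambda>x. alex_op x b) ^^ z) a) b" by simp
  also have "\<dots> = alex_op ([:0, 1:] ^ z * a + (1 - [:0, 1:] ^ z) * b) b" by (simp only: Suc.IH)
  also have "\<dots> = [:0, 1:] ^ Suc z * a + (1 - [:0, 1:] ^ Suc z) * b"
    unfolding alex_op_def by (simp add: algebra_simps)
  finally show ?case .
qed

lemma col_main:
  assumes p: "prime p" and hb: "irr_pos_breadth p h" and wf: "wf_diagram D"
  shows "col_dim p h z D \<le> n_arcs D \<and>
    (\<exists>g. irr_pos_breadth p g \<and> col_dim p h z D \<le> col_dim p g 1 D)"
proof -
  interpret poly_mod_prime p by unfold_locales (rule p)
  have irr: "irreducible_m h" and Dh: "degree_m h \<ge> 1" and c0: "\<not> p dvd coeff h 0"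
    using hb unfolding irr_pos_breadth_def by auto
  obtain g where g: "irreducible_m g" "degree_m g \<ge> 1" "\<not> p dvd coeff g 0"
    "\<forall>a. g dvdm a \<longrightarrow> h dvdm pcompose a ([:0, 1:] ^ z)"
    using minpoly_exists[OF irr Dh c0, of z] by blast
  define T where "T = ([:0, 1:] :: int poly) ^ z"
  define \<phi> where "\<phi> a = pcompose a T" for a
  have qg: "qfield (\<lambda>x. g dvdm x)" by (rule qfield_h[OF g(1) g(2)])
  have qh: "qfield (\<lambda>x. h dvdm x)" by (rule qfield_h[OF irr Dh])
  define n where "n = n_arcs D"
  define cr where "cr = crossings D"
  have wf': "\<forall>(b, r, l) \<in> set cr. b < n \<and> r < n \<and> l < n"
    using wf unfolding wf_diagram_def n_def cr_def by blast
  interpret TT: tfield "\<lambda>x. g dvdm x" "\<lambda>x. h dvdm x" \<phi> n cr "[:0, 1:]"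
  proof (intro tfield.intro qhom.intro qhom_axioms.intro tfield_axioms.intro qg qh wf')
    show "\<phi> (a + b) = \<phi> a + \<phi> b" for a b by (simp add: \<phi>_def pcompose_add)
    show "\<phi> (a * b) = \<phi> a * \<phi> b" for a b by (simp add: \<phi>_def pcompose_mult)
    show "\<phi> 1 = 1" by (simp add: \<phi>_def pcompose_1)
    show "h dvdm \<phi> a" if "g dvdm a" for a using g(4) that by (simp add: \<phi>_def T_def)
  qed
  have phiX: "\<phi> [:0, 1:] = T" unfolding \<phi>_def by (rule pc_X)
  have ring1: "x - (T * y + (1 - T) * w) = x - T * y - (1 - T) * w" for x y w :: "int poly"
    by (simp add: algebra_simps)
  have ring2: "x - ([:0, 1:] * y + (1 - [:0, 1:]) * w) = x - [:0, 1:] * y - (1 - [:0, 1:]) * w"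
    for x y w :: "int poly" by (simp add: algebra_simps)
  have colK: "is_coloring p h z D c \<longleftrightarrow> c \<in> TT.SK" for c
    unfolding is_coloring_def TT.SK_def feq_def alex_pow_eq phiX cr_def[symmetric] T_def[symmetric]
    by (simp only: ring1 mem_Collect_eq)
  have colF: "is_coloring p g 1 D c \<longleftrightarrow> c \<in> TT.SF" for c
    unfolding is_coloring_def TT.SF_def feq_def alex_pow_eq power_one_right cr_def[symmetric]
    by (simp only: ring2 mem_Collect_eq)
  have indK: "lin_indep p h n d vs \<longleftrightarrow> TT.VK.indep vs d" for d vs
    unfolding lin_indep_def TT.VK.indep_def feq_def by (simp add: fun_sum_apply)
  have indF: "lin_indep p g n d vs \<longleftrightarrow> TT.VF.indep vs d" for d vs
    unfolding lin_indep_def TT.VF.indep_def feq_def by (simp add: fun_sum_apply)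
  define PK where "PK d \<longleftrightarrow> (\<exists>u. (\<forall>i<d. u i \<in> TT.SK) \<and> TT.VK.indep u d)" for d
  define PF where "PF d \<longleftrightarrow> (\<exists>u. (\<forall>i<d. u i \<in> TT.SF) \<and> TT.VF.indep u d)" for d
  have cK: "col_dim p h z D = (GREATEST d. PK d)"
    unfolding col_dim_def PK_def n_def[symmetric] colK indK ..
  have cF: "col_dim p g 1 D = (GREATEST d. PF d)"
    unfolding col_dim_def PF_def n_def[symmetric] colF indF ..
  have bK: "\<forall>d. PK d \<longrightarrow> d \<le> n"
    unfolding PK_def using TT.K.vec_bound by blast
  have bF: "\<forall>d. PF d \<longrightarrow> d \<le> n"
    unfolding PF_def using TT.F.vec_bound by blast
  have PK0: "PK 0" unfolding PK_def TT.VK.indep_def by simp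
  have PKc: "PK (col_dim p h z D)" unfolding cK
    by (rule GreatestI_nat[of PK 0 n]) (use PK0 bK in auto)
  have "PF (col_dim p h z D)" using TT.main_transfer PKc unfolding PK_def PF_def by blast
  then have "col_dim p h z D \<le> col_dim p g 1 D" unfolding cF
    by (rule Greatest_le_nat[of PF _ n]) (use bF in auto)
  moreover have "col_dim p h z D \<le> n_arcs D" using bK PKc by (simp add: n_def)
  moreover have "irr_pos_breadth p g" using g unfolding irr_pos_breadth_def by auto
  ultimately show ?thesis by blast
qed

theorem lemma8p1:
  assumes "wf_diagram D"
  shows "A_Q D = (SUP x \<in> QF. a_inv (fst x) (snd x) 1 D)
    \<and> (\<forall>p h z. prime p \<and> odd p \<and> irr_pos_breadth p h \<and> z \<ge> 1 \<longrightarrow>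
          (\<exists>h'. irr_pos_breadth p h' \<and> a_inv p h z D \<le> a_inv p h' 1 D))"
proof
  show "\<forall>p h z. prime p \<and> odd p \<and> irr_pos_breadth p h \<and> z \<ge> 1 \<longrightarrow>
          (\<exists>h'. irr_pos_breadth p h' \<and> a_inv p h z D \<le> a_inv p h' 1 D)"
  proof (intro allI impI)
    fix p h z assume a: "prime p \<and> odd p \<and> irr_pos_breadth p h \<and> (z::nat) \<ge> 1"
    then obtain g where "irr_pos_breadth p g" "col_dim p h z D \<le> col_dim p g 1 D"
      using col_main[OF _ _ assms, of p h z] by blast
    then show "\<exists>h'. irr_pos_breadth p h' \<and> a_inv p h z D \<le> a_inv p h' 1 D"
      unfolding a_inv_def by (intro exI[of _ g]) auto
  qed
  define L :: "(int \<times> int poly \<times> nat) set" where "L = {(p, h, z). (p, h) \<in> QF}"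
  define F where "F x = a_inv (fst x) (fst (snd x)) (snd (snd x)) D" for x :: "int \<times> int poly \<times> nat"
  define G where "G y = a_inv (fst y) (snd y) 1 D" for y :: "int \<times> int poly"
  have AQ: "A_Q D = (SUP x \<in> L. F x)" unfolding A_Q_def L_def F_def ..
  have bnd: "a_inv p h z D \<le> int (n_arcs D) - 1" if "(p, h) \<in> QF" for p h z
    using col_main[OF _ _ assms, of p h z] that unfolding QF_def a_inv_def by auto
  have bddL: "bdd_above (F ` L)"
  proof (rule bdd_aboveI[of _ "int (n_arcs D) - 1"])
    fix y assume "y \<in> F ` L"
    then obtain p h z where "(p, h) \<in> QF" "y = F (p, h, z)" unfolding L_def by auto
    then show "y \<le> int (n_arcs D) - 1" using bnd unfolding F_def by simp
  qed
  have bddR: "bdd_above (G ` QF)"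
  proof (rule bdd_aboveI[of _ "int (n_arcs D) - 1"])
    fix y assume "y \<in> G ` QF"
    then obtain p h where "(p, h) \<in> QF" "y = G (p, h)" by auto
    then show "y \<le> int (n_arcs D) - 1" using bnd unfolding G_def by simp
  qed
  show "A_Q D = (SUP x \<in> QF. a_inv (fst x) (snd x) 1 D)"
  proof (cases "QF = {}")
    case True
    then have "L = {}" unfolding L_def by auto
    with True show ?thesis unfolding AQ by simp
  next
    case False
    then have L0: "L \<noteq> {}" unfolding L_def by auto
    have le1: "(SUP x \<in> L. F x) \<le> (SUP y \<in> QF. G y)"
    proof (rule cSUP_least[OF L0])
      fix x assume "x \<in> L"
      then obtain p h z where x: "x = (p, h, z)" and ph: "(p, h) \<in> QF" unfolding L_def by auto
      then have pr: "prime p" "odd p" "irr_pos_breadth p h" unfolding QF_def by auto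
      obtain g where g: "irr_pos_breadth p g" "col_dim p h z D \<le> col_dim p g 1 D"
        using col_main[OF pr(1) pr(3) assms, of z] by blast
      have gQ: "(p, g) \<in> QF" using pr g unfolding QF_def by auto
      have "F x \<le> G (p, g)" unfolding x F_def G_def a_inv_def using g by simp
      also have "\<dots> \<le> (SUP y \<in> QF. G y)" by (rule cSUP_upper[OF gQ bddR])
      finally show "F x \<le> (SUP y \<in> QF. G y)" .
    qed
    have le2: "(SUP y \<in> QF. G y) \<le> (SUP x \<in> L. F x)"
    proof (rule cSUP_least[OF False])
      fix y assume yQ: "y \<in> QF"
      obtain p h where y: "y = (p, h)" by (cases y)
      have "(p, h, 1) \<in> L" using yQ y unfolding L_def by auto
      then have "F (p, h, 1) \<le> (SUP x \<in> L. F x)" by (rule cSUP_upper[OF _ bddL])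
      then show "G y \<le> (SUP x \<in> L. F x)" unfolding y F_def G_def by simp
    qed
    have "A_Q D = (SUP y \<in> QF. G y)" unfolding AQ using le1 le2 by (rule antisym)
    then show ?thesis unfolding G_def .
  qed
qed


end
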